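(* For every $n\in\mathbb{N}$, there exists a planar graph $G$ on $2n$ vertices, of pathwidth $3$ and maximum degree $5$, such that $\pi_\alpha(G)\ge \log_2(n+1)$.
   Context: A string $s=s_1,\ldots,s_{2k}$ (of even length) is an anagram if $s_1,\ldots,s_k$ is a permutation of $s_{k+1},\ldots,s_{2k}$. For a graph $G$, a colouring $\varphi:V(G)\to\{1,\ldots,c\}$ is anagram-free if for every path $v_1,v_2,\ldots,v_{2k}$ in $G$ with an even number $2k\ge 2$ of vertices (i.e., an odd number of edges), the string $\varphi(v_1),\ldots,\varphi(v_{2k})$ is not an anagram. The anagram-free chromatic number $\pi_\alpha(G)$ is the smallest $c$ such that $G$ has an anagram-free colouring with $c$ colours. *)

theory Defs
  imports "HOL-Analysis.Analysis" "HOL-Library.Multiset"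
begin

definition simple_graph :: "'a set \<Rightarrow> 'a set set \<Rightarrow> bool" where
  "simple_graph V E \<longleftrightarrow> finite V \<and> (\<forall>e\<in>E. e \<subseteq> V \<and> card e = 2)"

definition degree :: "'a set \<Rightarrow> 'a set set \<Rightarrow> 'a \<Rightarrow> nat" where
  "degree V E v = card {u\<in>V. {u, v} \<in> E}"

definition max_degree :: "'a set \<Rightarrow> 'a set set \<Rightarrow> nat" where
  "max_degree V E = Max (insert 0 (degree V E ` V))"

definition planar :: "'a set \<Rightarrow> 'a set set \<Rightarrow> bool" where
  "planar V E \<longleftrightarrow> (\<exists>(pos :: 'a \<Rightarrow> complex) (\<Gamma> :: 'a set \<Rightarrow> real \<Rightarrow> complex).
      inj_on pos V \<and>
      (\<forall>e\<in>E. arc (\<Gamma> e) \<and> {pathstart (\<Gamma> e), pathfinish (\<Gamma> e)} = pos ` e \<and>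
               path_image (\<Gamma> e) \<inter> pos ` V = pos ` e) \<and>
      (\<forall>e\<in>E. \<forall>e'\<in>E. e \<noteq> e' \<longrightarrow> path_image (\<Gamma> e) \<inter> path_image (\<Gamma> e') \<subseteq> pos ` (e \<inter> e')))"

definition path_decomposition :: "'a set \<Rightarrow> 'a set set \<Rightarrow> 'a set list \<Rightarrow> bool" where
  "path_decomposition V E bs \<longleftrightarrow> bs \<noteq> [] \<and>
     (\<forall>i<length bs. bs ! i \<subseteq> V) \<and>
     (\<forall>v\<in>V. \<exists>i<length bs. v \<in> bs ! i) \<and>
     (\<forall>e\<in>E. \<exists>i<length bs. e \<subseteq> bs ! i) \<and>
     (\<forall>v i j k. i \<le> j \<and> j \<le> k \<and> k < length bs \<and> v \<in> bs ! i \<and> v \<in> bs ! k \<longrightarrow> v \<in> bs ! j)"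

definition pd_width :: "'a set list \<Rightarrow> nat" where
  "pd_width bs = Max (card ` set bs) - 1"

definition pathwidth :: "'a set \<Rightarrow> 'a set set \<Rightarrow> nat" where
  "pathwidth V E = (LEAST w. \<exists>bs. path_decomposition V E bs \<and> pd_width bs = w)"

definition gpath :: "'a set \<Rightarrow> 'a set set \<Rightarrow> 'a list \<Rightarrow> bool" where
  "gpath V E xs \<longleftrightarrow> xs \<noteq> [] \<and> set xs \<subseteq> V \<and> distinct xs \<and>
     (\<forall>i. i + 1 < length xs \<longrightarrow> {xs ! i, xs ! (i + 1)} \<in> E)"

definition anagram :: "'b list \<Rightarrow> bool" where
  "anagram s \<longleftrightarrow> even (length s) \<and>
     mset (take (length s div 2) s) = mset (drop (length s div 2) s)"

definition anagram_free_colouring :: "'a set \<Rightarrow> 'a set set \<Rightarrow> nat \<Rightarrow> ('a \<Rightarrow> nat) \<Rightarrow> bool" where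
  "anagram_free_colouring V E c \<phi> \<longleftrightarrow> \<phi> ` V \<subseteq> {1..c} \<and>
     (\<forall>xs. gpath V E xs \<and> even (length xs) \<and> length xs \<ge> 2 \<longrightarrow> \<not> anagram (map \<phi> xs))"

definition anagram_chromatic_number :: "'a set \<Rightarrow> 'a set set \<Rightarrow> nat" where
  "anagram_chromatic_number V E = (LEAST c. \<exists>\<phi>. anagram_free_colouring V E c \<phi>)"

end

theory Submission
  imports Defs
begin


definition VV :: "nat \<Rightarrow> nat set" where "VV n = {..<2*n}"
definition EE :: "nat \<Rightarrow> nat set set" where
  "EE n = {{2*t, 2*t+1} | t. t < n} \<union> {{2*t+a, 2*t+b} | t a b. t+1 < n \<and> a \<le> 1 \<and> 2 \<le> b \<and> b \<le> 3}"

lemma E_cases: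
  assumes "e \<in> EE n"
  shows "(\<exists>t<n. e = {2*t,2*t+1}) \<or> (\<exists>t. t+1<n \<and> (e = {2*t,2*t+2} \<or> e = {2*t,2*t+3} \<or> e = {2*t+1,2*t+2} \<or> e = {2*t+1,2*t+3}))"
proof -
  have "(\<exists>t. t < n \<and> e = {2*t, 2*t+1}) \<or> (\<exists>t a b. e = {2*t+a, 2*t+b} \<and> t+1 < n \<and> a \<le> 1 \<and> 2 \<le> b \<and> b \<le> 3)"
    using assms unfolding EE_def by blast
  then show ?thesis
  proof (elim disjE exE conjE)
    fix t assume "t < n" "e = {2*t, 2*t+1}" then show ?thesis by blast
  next
    fix t a b :: nat assume h: "e = {2*t+a, 2*t+b}" "t+1 < n" "a \<le> 1" "2 \<le> b" "b \<le> 3"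
    then have "a = 0 \<or> a = 1" "b = 2 \<or> b = 3" by auto
    then have "e = {2*t,2*t+2} \<or> e = {2*t,2*t+3} \<or> e = {2*t+1,2*t+2} \<or> e = {2*t+1,2*t+3}"
      using h(1) by (elim disjE) simp_all
    then show ?thesis using h(2) by blast
  qed
qed

lemma simple: "simple_graph (VV n) (EE n)"
  unfolding simple_graph_def VV_def EE_def by (auto simp: card_insert_if)

lemma cardV: "card (VV n) = 2*n" by (simp add: VV_def)

lemma nbrS: "u = v+1 \<or> u+1 = v \<or> u = v+2 \<or> u+2 = v \<or> (even v \<and> u = v+3) \<or> (odd v \<and> u+3 = v) \<Longrightarrow> u \<in> {v-2, v-1, v+1, v+2, if even v then v+3 else v-3::nat}"
  by auto

lemma nbrs: "{u \<in> VV n. {u, v} \<in> EE n} \<subseteq> {v-2, v-1, v+1, v+2, if even v then v+3 else v-3}"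
proof
  fix u assume "u \<in> {u \<in> VV n. {u, v} \<in> EE n}"
  then have "{u,v} \<in> EE n" by simp
  from E_cases[OF this] have "u = v+1 \<or> u+1 = v \<or> u = v+2 \<or> u+2 = v \<or> (even v \<and> u = v+3) \<or> (odd v \<and> u+3 = v)"
    by (elim disjE exE conjE) (auto simp: doubleton_eq_iff)
  then show "u \<in> {v-2, v-1, v+1, v+2, if even v then v+3 else v-3}" by (rule nbrS)
qed

lemma maxdeg: "max_degree (VV n) (EE n) \<le> 5"
proof -
  have "degree (VV n) (EE n) v \<le> 5" for v
  proof -
    have "degree (VV n) (EE n) v \<le> card {v-2, v-1, v+1, v+2, if even v then v+3 else v-3}"
      unfolding degree_def by (rule card_mono[OF _ nbrs]) simp
    also have "\<dots> \<le> 5"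
      using card_length[of "[v-2, v-1, v+1, v+2, if even v then v+3 else v-3]"] by simp
    finally show ?thesis .
  qed
  then show ?thesis unfolding max_degree_def by (simp add: VV_def)
qed



definition bags :: "nat \<Rightarrow> nat set list" where
  "bags n = map (\<lambda>t. {2*t..<2*t+4} \<inter> VV n) [0..<n]"

lemma bags_nth: "t < n \<Longrightarrow> bags n ! t = {2*t..<2*t+4} \<inter> {..<2*n}"
  by (simp add: bags_def VV_def)

lemma len_bags: "length (bags n) = n" by (simp add: bags_def)

lemma E_cases2:
  assumes "e \<in> EE n"
  shows "\<exists>t<n. e = {2*t,2*t+1} \<or> (t+1<n \<and> (e = {2*t,2*t+2} \<or> e = {2*t,2*t+3} \<or> e = {2*t+1,2*t+2} \<or> e = {2*t+1,2*t+3}))"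
  using E_cases[OF assms] add_lessD1 by blast

lemma pd: assumes "n \<ge> 1" shows "path_decomposition (VV n) (EE n) (bags n)"
proof -
  have A: "bags n \<noteq> []" using assms by (simp add: bags_def)
  have B: "\<forall>i<length (bags n). bags n ! i \<subseteq> VV n" by (simp add: bags_nth len_bags VV_def)
  have C: "\<forall>v\<in>VV n. \<exists>i<length (bags n). v \<in> bags n ! i"
  proof
    fix v assume v: "v \<in> VV n"
    then have "v div 2 < n" by (simp add: VV_def)
    moreover have "v \<in> bags n ! (v div 2)" using v \<open>v div 2 < n\<close> by (simp add: bags_nth VV_def)
    ultimately show "\<exists>i<length (bags n). v \<in> bags n ! i" by (auto simp: len_bags)
  qed
  have D: "\<forall>e\<in>EE n. \<exists>i<length (bags n). e \<subseteq> bags n ! i"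
  proof
    fix e assume "e \<in> EE n"
    from E_cases2[OF this] obtain t where t: "t < n" and
      "e = {2*t,2*t+1} \<or> (t+1<n \<and> (e = {2*t,2*t+2} \<or> e = {2*t,2*t+3} \<or> e = {2*t+1,2*t+2} \<or> e = {2*t+1,2*t+3}))"
      by blast
    then have "e \<subseteq> bags n ! t" by (elim disjE conjE) (simp_all add: bags_nth)
    then show "\<exists>i<length (bags n). e \<subseteq> bags n ! i" using t by (auto simp: len_bags)
  qed
  have F: "\<forall>v i j k. i \<le> j \<and> j \<le> k \<and> k < length (bags n) \<and> v \<in> bags n ! i \<and> v \<in> bags n ! k \<longrightarrow> v \<in> bags n ! j"
  proof (intro allI impI, elim conjE)
    fix v i j k assume h: "i \<le> j" "j \<le> k" "k < length (bags n)" "v \<in> bags n ! i" "v \<in> bags n ! k"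
    then have "2*i \<le> v" "v < 2*i+4" "2*k \<le> v" "v < 2*k+4" "v < 2*n"
      by (simp_all add: bags_nth len_bags)
    then show "v \<in> bags n ! j" using h by (simp add: bags_nth len_bags)
  qed
  show ?thesis unfolding path_decomposition_def using A B C D F by blast
qed

lemma width: assumes "n \<ge> 1" shows "pd_width (bags n) \<le> 3"
proof -
  have "\<forall>b\<in>set (bags n). card b \<le> 4"
  proof
    fix b assume "b \<in> set (bags n)"
    then obtain t where "b = {2*t..<2*t+4} \<inter> VV n" by (auto simp: bags_def)
    then have "card b \<le> card {2*t..<2*t+4}" by (intro card_mono) auto
    then show "card b \<le> 4" by simp
  qed
  moreover have "set (bags n) \<noteq> {}" using assms by (simp add: bags_def)
  ultimately have "Max (card ` set (bags n)) \<le> 4" by (simp)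
  then show ?thesis unfolding pd_width_def by simp
qed

lemma pw: assumes "n \<ge> 1" shows "pathwidth (VV n) (EE n) \<le> 3"
proof -
  have "pathwidth (VV n) (EE n) \<le> pd_width (bags n)"
    unfolding pathwidth_def by (rule Least_le) (use pd[OF assms] in blast)
  then show ?thesis using width[OF assms] by simp
qed



lemma orient:
  assumes "finite I"
    and "\<forall>c. even (count (image_mset x (mset_set I) + image_mset y (mset_set I)) c)"
  shows "\<exists>s. image_mset (\<lambda>t. if s t then x t else y t) (mset_set I)
             = image_mset (\<lambda>t. if s t then y t else x t) (mset_set I)"
  using assms
proof (induction "card I" arbitrary: I x y rule: less_induct)
  case less
  show ?case
  proof (cases "I = {}")
    case True then show ?thesis by simp
  next
    case False
    then obtain t1 where t1: "t1 \<in> I" by blast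
    define J where "J = I - {t1}"
    have fJ: "finite J" using less.prems by (simp add: J_def)
    have cJ: "card J < card I" using less.prems(1) t1 unfolding J_def by (rule card_Diff1_less)
    have mI: "mset_set I = add_mset t1 (mset_set J)" using less.prems t1 unfolding J_def
      by (simp add: mset_set.remove)
    show ?thesis
    proof (cases "x t1 = y t1")
      case True
      have "\<forall>c. even (count (image_mset x (mset_set J) + image_mset y (mset_set J)) c)"
      proof
        fix c
        have "even (count (image_mset x (mset_set I) + image_mset y (mset_set I)) c)" using less.prems by blast
        then show "even (count (image_mset x (mset_set J) + image_mset y (mset_set J)) c)"
          using True by (simp add: mI split: if_splits)
      qed
      then obtain s where s: "image_mset (\<lambda>t. if s t then x t else y t) (mset_set J)
             = image_mset (\<lambda>t. if s t then y t else x t) (mset_set J)"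
        using less.hyps[OF cJ fJ] by blast
      show ?thesis by (rule exI[of _ s]) (simp add: mI s True)
    next
      case False
      define X where "X = x t1"
      define Y where "Y = y t1"
      have XY: "X \<noteq> Y" using False by (simp add: X_def Y_def)
      have evX: "even (count (image_mset x (mset_set I) + image_mset y (mset_set I)) X)" using less.prems by blast
      then have "odd (count (image_mset x (mset_set J) + image_mset y (mset_set J)) X)"
        using XY by (simp add: mI X_def Y_def)
      then have "X \<in># image_mset x (mset_set J) + image_mset y (mset_set J)"
        by (metis count_inI even_zero)
      then obtain t2 where t2: "t2 \<in> J" and t2X: "x t2 = X \<or> y t2 = X" using fJ by auto
      define Z where "Z = (if x t2 = X then y t2 else x t2)"
      define K where "K = J - {t2}"
      have fK: "finite K" using fJ by (simp add: K_def)
      have mJ: "mset_set J = add_mset t2 (mset_set K)" using fJ t2 unfolding K_def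
        by (simp add: mset_set.remove)
      have t1K: "t1 \<notin> K" "t2 \<notin> K" "t1 \<noteq> t2" using t2 by (auto simp: K_def J_def)
      define x' where "x' = x(t2 := Y)"
      define y' where "y' = y(t2 := Z)"
      have eqK: "\<And>f g. (\<forall>t\<in>K. f t = g t) \<Longrightarrow> image_mset f (mset_set K) = image_mset g (mset_set K)"
        using fK by (intro image_mset_cong) simp
      have x'K: "image_mset x' (mset_set K) = image_mset x (mset_set K)"
        using t1K by (intro eqK) (simp add: x'_def)
      have y'K: "image_mset y' (mset_set K) = image_mset y (mset_set K)"
        using t1K by (intro eqK) (simp add: y'_def)
      have pair2: "{#x t2, y t2#} = {#X, Z#}" using t2X by (auto simp: Z_def)
      have "\<forall>c. even (count (image_mset x' (mset_set J) + image_mset y' (mset_set J)) c)"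
      proof
        fix c
        have "even (count (image_mset x (mset_set I) + image_mset y (mset_set I)) c)" using less.prems by blast
        moreover have "image_mset x (mset_set I) + image_mset y (mset_set I)
            = {#X, X#} + (image_mset x' (mset_set J) + image_mset y' (mset_set J))"
        proof -
          have "image_mset x (mset_set I) + image_mset y (mset_set I)
              = {#X, Y#} + {#x t2, y t2#} + (image_mset x (mset_set K) + image_mset y (mset_set K))"
            by (simp add: mI mJ X_def Y_def)
          also have "\<dots> = {#X, X#} + ({#Y, Z#} + (image_mset x' (mset_set K) + image_mset y' (mset_set K)))"
            by (simp add: pair2 x'K y'K)
          also have "\<dots> = {#X, X#} + (image_mset x' (mset_set J) + image_mset y' (mset_set J))"
            by (simp add: mJ x'_def y'_def)
          finally show ?thesis .
        qed
        ultimately show "even (count (image_mset x' (mset_set J) + image_mset y' (mset_set J)) c)"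
          by (auto split: if_splits)
      qed
      then obtain s' where s': "image_mset (\<lambda>t. if s' t then x' t else y' t) (mset_set J)
             = image_mset (\<lambda>t. if s' t then y' t else x' t) (mset_set J)"
        using less.hyps[OF cJ fJ] by blast
      define T' where "T' = image_mset (\<lambda>t. if s' t then x t else y t) (mset_set K)"
      define B' where "B' = image_mset (\<lambda>t. if s' t then y t else x t) (mset_set K)"
      have T'K: "image_mset (\<lambda>t. if s' t then x' t else y' t) (mset_set K) = T'"
        unfolding T'_def using t1K by (intro eqK) (simp add: x'_def y'_def)
      have B'K: "image_mset (\<lambda>t. if s' t then y' t else x' t) (mset_set K) = B'"
        unfolding B'_def using t1K by (intro eqK) (simp add: x'_def y'_def)
      show ?thesis
      proof (cases "s' t2")
        case True
        have bal: "add_mset Y T' = add_mset Z B'" using s' True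
          by (simp add: mJ T'K B'K x'_def y'_def)
        define s where "s = s'(t1 := False, t2 := (x t2 = X))"
        have st: "s t1 = False" "s t2 = (x t2 = X)" using t1K by (auto simp: s_def)
        have sT: "image_mset (\<lambda>t. if s t then x t else y t) (mset_set K) = T'"
          unfolding T'_def using t1K by (intro eqK) (auto simp: s_def)
        have sB: "image_mset (\<lambda>t. if s t then y t else x t) (mset_set K) = B'"
          unfolding B'_def using t1K by (intro eqK) (auto simp: s_def)
        have "image_mset (\<lambda>t. if s t then x t else y t) (mset_set I) = add_mset Y (add_mset X T')"
          using t1K t2X by (auto simp: mI mJ sT st X_def Y_def)
        moreover have "image_mset (\<lambda>t. if s t then y t else x t) (mset_set I) = add_mset X (add_mset Z B')"
          using t1K t2X by (auto simp: mI mJ sB st X_def Y_def Z_def)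
        ultimately show ?thesis using bal by (intro exI[of _ s]) (metis add_mset_commute)
      next
        case False
        have bal: "add_mset Z T' = add_mset Y B'" using s' False
          by (simp add: mJ T'K B'K x'_def y'_def)
        define s where "s = s'(t1 := True, t2 := (x t2 \<noteq> X))"
        have st: "s t1 = True" "s t2 = (x t2 \<noteq> X)" using t1K by (auto simp: s_def)
        have sT: "image_mset (\<lambda>t. if s t then x t else y t) (mset_set K) = T'"
          unfolding T'_def using t1K by (intro eqK) (auto simp: s_def)
        have sB: "image_mset (\<lambda>t. if s t then y t else x t) (mset_set K) = B'"
          unfolding B'_def using t1K by (intro eqK) (auto simp: s_def)
        have "image_mset (\<lambda>t. if s t then x t else y t) (mset_set I) = add_mset X (add_mset Z T')"
          using t1K t2X by (auto simp: mI mJ sT st X_def Y_def Z_def)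
        moreover have "image_mset (\<lambda>t. if s t then y t else x t) (mset_set I) = add_mset Y (add_mset X B')"
          using t1K t2X by (auto simp: mI mJ sB st X_def Y_def Z_def)
        ultimately show ?thesis using bal by (intro exI[of _ s]) (metis add_mset_commute)
      qed
    qed
  qed
qed



lemma cross_edge:
  assumes "t+1 < n" "u = 2*t \<or> u = 2*t+1" "w = 2*t+2 \<or> w = 2*t+3"
  shows "{u,w} \<in> EE n" "{w,u} \<in> EE n"
proof -
  have "\<exists>a. u = 2*t+a \<and> a \<le> 1" using assms(2)
  proof (elim disjE)
    assume "u = 2*t" then show ?thesis by (intro exI[of _ 0]) simp
  next
    assume "u = 2*t+1" then show ?thesis by (intro exI[of _ 1]) simp
  qed
  then obtain a where a: "u = 2*t+a" "a \<le> 1" by blast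
  have "\<exists>b. w = 2*t+b \<and> 2 \<le> b \<and> b \<le> 3" using assms(3)
  proof (elim disjE)
    assume "w = 2*t+2" then show ?thesis by (intro exI[of _ 2]) simp
  next
    assume "w = 2*t+3" then show ?thesis by (intro exI[of _ 3]) simp
  qed
  then obtain b where b: "w = 2*t+b" "2 \<le> b" "b \<le> 3" by blast
  show "{u,w} \<in> EE n" using assms(1) a b unfolding EE_def by blast
  then show "{w,u} \<in> EE n" by (simp add: insert_commute)
qed

lemma rung_edge1: "t < n \<Longrightarrow> {2*t, 2*t+1} \<in> EE n"
  unfolding EE_def by blast

lemma rung_edge2: "t < n \<Longrightarrow> {2*t+1, 2*t} \<in> EE n"
  using rung_edge1 by (simp add: insert_commute)



lemma lower:
  assumes afc: "anagram_free_colouring (VV n) (EE n) c \<phi>"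
  shows "n + 1 \<le> 2^c"
proof (rule ccontr)
  assume "\<not> n + 1 \<le> 2^c"
  then have lt: "2^c < n + 1" by simp
  have rng: "\<phi> v \<in> {1..c}" if "v < 2*n" for v
    using afc that unfolding anagram_free_colouring_def VV_def by auto
  define x where "x t = \<phi> (2*t)" for t
  define y where "y t = \<phi> (2*t+1)" for t
  define M where "M k = image_mset x (mset_set {..<k}) + image_mset y (mset_set {..<k})" for k
  define Pv where "Pv k = {col \<in> {1..c}. odd (count (M k) col)}" for k
  have "\<not> inj_on Pv {0..n}"
  proof
    assume "inj_on Pv {0..n}"
    moreover have "Pv ` {0..n} \<subseteq> Pow {1..c}" by (auto simp: Pv_def)
    ultimately have "card {0..n} \<le> card (Pow {1..c})" by (intro card_inj_on_le) auto
    then show False using lt by (simp add: card_Pow)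
  qed
  then obtain i0 j0 where ij0: "i0 \<in> {0..n}" "j0 \<in> {0..n}" "i0 \<noteq> j0" "Pv i0 = Pv j0"
    unfolding inj_on_def by blast
  define i where "i = min i0 j0"
  define j where "j = max i0 j0"
  have ij: "i < j" "j \<le> n" "Pv i = Pv j" using ij0 by (auto simp: i_def j_def min_def max_def)
  define N where "N = image_mset x (mset_set {i..<j}) + image_mset y (mset_set {i..<j})"
  have MN: "M j = M i + N"
  proof -
    have U: "{..<j} = {..<i} \<union> {i..<j}" using ij by auto
    have "mset_set ({..<i} \<union> {i..<j}) = mset_set {..<i} + mset_set {i..<j}"
      by (rule mset_set_Union) auto
    then have "mset_set {..<j} = mset_set {..<i} + mset_set {i..<j}"
      by (simp only: U)
    then show ?thesis by (simp add: M_def N_def)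
  qed
  have evN: "\<forall>col. even (count N col)"
  proof
    fix col
    show "even (count N col)"
    proof (cases "col \<in> {1..c}")
      case True
      then have "odd (count (M i) col) = odd (count (M j) col)"
        using ij(3) unfolding Pv_def by blast
      then show ?thesis using MN by (cases "even (count (M i) col)") simp_all
    next
      case False
      have "\<forall>t\<in>{i..<j}. x t \<noteq> col \<and> y t \<noteq> col"
      proof
        fix t assume "t \<in> {i..<j}"
        then have "2*t < 2*n" "2*t+1 < 2*n" using ij by auto
        then show "x t \<noteq> col \<and> y t \<noteq> col" using rng[of "2*t"] rng[of "2*t+1"] False unfolding x_def y_def by blast
      qed
      then have "count N col = 0" by (auto simp: N_def count_eq_zero_iff)
      then show ?thesis by simp
    qed
  qed
  obtain s where s: "image_mset (\<lambda>t. if s t then x t else y t) (mset_set {i..<j})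
             = image_mset (\<lambda>t. if s t then y t else x t) (mset_set {i..<j})"
    using orient[of "{i..<j}" x y] evN unfolding N_def by auto
  define tv where "tv t = (if s t then 2*t else 2*t+1)" for t
  define bv where "bv t = (if s t then 2*t+1 else 2*t)" for t
  have tvd: "tv t div 2 = t" "bv t div 2 = t" "tv t \<noteq> bv t" "tv t = 2*t \<or> tv t = 2*t+1" "bv t = 2*t \<or> bv t = 2*t+1" for t
    by (auto simp: tv_def bv_def)
  define m where "m = j - i"
  have m1: "m \<ge> 1" using ij by (simp add: m_def)
  define f where "f p = (if p < m then tv (i+p) else bv (i + (2*m - 1 - p)))" for p
  define xs where "xs = map f [0..<2*m]"
  have len: "length xs = 2*m" by (simp add: xs_def)
  have nth: "p < 2*m \<Longrightarrow> xs ! p = f p" for p by (simp add: xs_def)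
  have gp: "gpath (VV n) (EE n) xs"
    unfolding gpath_def
  proof (intro conjI allI impI)
    show "xs \<noteq> []" using m1 by (simp add: xs_def)
    show "set xs \<subseteq> VV n"
    proof
      fix v assume "v \<in> set xs"
      then obtain p where p: "p < 2*m" "v = f p" by (auto simp: xs_def)
      have "v div 2 < n" using p ij tvd(1,2) by (auto simp: f_def m_def)
      then show "v \<in> VV n" by (auto simp: VV_def)
    qed
    show "distinct xs" unfolding xs_def distinct_map
    proof
      show "distinct [0..<2*m]" by simp
      have A: "f p div 2 = (if p < m then i + p else i + (2*m-1-p))" for p
        using tvd by (simp add: f_def)
      have B: "f p \<noteq> f q" if "p < m" "\<not> q < m" "q < 2*m" for p q
      proof (cases "i + p = i + (2*m-1-q)")
        case True
        then have "f p = tv (i+p)" "f q = bv (i+p)" using that by (auto simp: f_def)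
        then show ?thesis using tvd(3) by simp
      next
        case False
        then have "f p div 2 \<noteq> f q div 2" using that by (simp add: A)
        then show ?thesis by auto
      qed
      show "inj_on f (set [0..<2 * m])"
      proof
        fix p q assume pq: "p \<in> set [0..<2 * m]" "q \<in> set [0..<2 * m]" "f p = f q"
        then have pq2: "p < 2*m" "q < 2*m" by auto
        have "f p div 2 = f q div 2" using pq by simp
        then have C: "(if p < m then i + p else i + (2*m-1-p)) = (if q < m then i + q else i + (2*m-1-q))"
          by (simp add: A)
        show "p = q"
        proof (cases "p < m")
          case True
          show ?thesis
          proof (cases "q < m")
            case True then show ?thesis using C \<open>p < m\<close> by simp
          next
            case False then show ?thesis using B[of p q] \<open>p < m\<close> pq pq2 by auto
          qed
        next
          case False
          show ?thesis
          proof (cases "q < m")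
            case True then show ?thesis using B[of q p] \<open>\<not> p < m\<close> pq pq2 by auto
          next
            case False then show ?thesis using C \<open>\<not> p < m\<close> pq2 by simp
          qed
        qed
      qed
    qed
    fix p assume "p + 1 < length xs"
    then have p2: "p + 1 < 2*m" by (simp add: len)
    have ij2: "j = i + m" using ij by (simp add: m_def)
    show "{xs ! p, xs ! (p + 1)} \<in> EE n"
    proof -
      consider "p + 1 < m" | "p + 1 = m" | "m \<le> p" by linarith
      then show ?thesis
      proof cases
        case 1
        then have "xs ! p = tv (i+p)" "xs ! (p+1) = tv ((i+p)+1)" using p2 by (simp_all add: nth f_def)
        moreover have "(i+p)+1 < n" using 1 ij ij2 by simp
        ultimately show ?thesis using tvd(4)[of "i+p"] tvd(4)[of "i+p+1"]
          by (intro cross_edge(1)[of "i+p"]) auto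
      next
        case 2
        then have e: "i + m - Suc 0 = i + p" by simp
        have "xs ! p = tv (i+p)" "xs ! (p+1) = bv (i+p)" using p2 2 by (simp_all add: nth f_def e)
        moreover have "i+p < n" using 2 ij ij2 by simp
        ultimately show ?thesis using rung_edge1[of "i+p" n] rung_edge2[of "i+p" n]
          by (auto simp: tv_def bv_def)
      next
        case 3
        define t where "t = i + (2*m-2-p)"
        have e1: "i + 2 * m - Suc p = t + 1" "i + 2 * m - Suc (Suc p) = t" using p2 3 by (simp_all add: t_def)
        have "xs ! p = bv (t+1)" "xs ! (p+1) = bv t" using p2 3 by (simp_all add: nth f_def e1)
        moreover have "t+1 < n" using 3 p2 ij ij2 by (simp add: t_def)
        ultimately show ?thesis using tvd(5)[of "t"] tvd(5)[of "t+1"]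
          by (intro cross_edge(2)[of "t"]) auto
      qed
    qed
  qed
  have tk: "take m xs = map tv [i..<j]"
    by (rule nth_equalityI) (simp_all add: len m_def nth f_def)
  have dr: "drop m xs = rev (map bv [i..<j])"
  proof (rule nth_equalityI)
    show "length (drop m xs) = length (rev (map bv [i..<j]))" by (simp add: len m_def)
    fix q assume "q < length (drop m xs)"
    then have q: "q < m" by (simp add: len)
    then have "drop m xs ! q = bv (i + (m - 1 - q))" by (simp add: len nth f_def)
    moreover have "rev (map bv [i..<j]) ! q = bv (i + (m - 1 - q))"
      using q by (simp add: rev_nth m_def)
    ultimately show "drop m xs ! q = rev (map bv [i..<j]) ! q" by simp
  qed
  have "anagram (map \<phi> xs)"
    unfolding anagram_def
  proof
    show "even (length (map \<phi> xs))" by (simp add: len)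
    have h: "length (map \<phi> xs) div 2 = m" by (simp add: len)
    have e1: "(\<lambda>t. \<phi> (tv t)) = (\<lambda>t. if s t then x t else y t)"
      by (auto simp: tv_def x_def y_def)
    have e2: "(\<lambda>t. \<phi> (bv t)) = (\<lambda>t. if s t then y t else x t)"
      by (auto simp: bv_def x_def y_def)
    have "mset (take m (map \<phi> xs)) = image_mset (\<lambda>t. \<phi> (tv t)) (mset_set {i..<j})"
      by (simp add: take_map tk mset_upt comp_def)
    also have "\<dots> = image_mset (\<lambda>t. \<phi> (bv t)) (mset_set {i..<j})" by (simp only: e1 e2 s)
    also have "\<dots> = mset (drop m (map \<phi> xs))"
      by (simp add: drop_map dr mset_upt image_mset.compositionality comp_def)
    finally show "mset (take (length (map \<phi> xs) div 2) (map \<phi> xs)) = mset (drop (length (map \<phi> xs) div 2) (map \<phi> xs))"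
      by (simp only: h)
  qed
  then show False using afc gp len m1 unfolding anagram_free_colouring_def by auto
qed



lemma colouring_exists: "anagram_free_colouring (VV n) (EE n) (2*n) Suc"
  unfolding anagram_free_colouring_def
proof (intro conjI allI impI)
  show "Suc ` VV n \<subseteq> {1..2*n}" by (auto simp: VV_def)
  fix xs assume h: "gpath (VV n) (EE n) xs \<and> even (length xs) \<and> 2 \<le> length xs"
  show "\<not> anagram (map Suc xs)"
  proof
    assume a: "anagram (map Suc xs)"
    define ys where "ys = map Suc xs"
    define k where "k = length ys div 2"
    have d: "distinct ys" using h by (simp add: ys_def gpath_def distinct_map)
    have "mset (take k ys) = mset (drop k ys)" using a by (simp add: anagram_def ys_def k_def)
    then have "set (take k ys) = set (drop k ys)" by (metis set_mset_mset)
    moreover have "set (take k ys) \<inter> set (drop k ys) = {}"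
      using d by (rule set_take_disj_set_drop_if_distinct) simp
    ultimately have "take k ys = []" by auto
    moreover have "k \<ge> 1" "length ys \<ge> 2" using h by (auto simp: k_def ys_def)
    ultimately show False by simp
  qed
qed

lemma chrom:
  assumes "n \<ge> 1"
  shows "log 2 (real n + 1) \<le> real (anagram_chromatic_number (VV n) (EE n))"
proof -
  define c where "c = anagram_chromatic_number (VV n) (EE n)"
  have "\<exists>\<phi>. anagram_free_colouring (VV n) (EE n) c \<phi>"
    unfolding c_def anagram_chromatic_number_def
    by (rule LeastI_ex) (use colouring_exists in blast)
  then obtain \<phi> where "anagram_free_colouring (VV n) (EE n) c \<phi>" by blast
  then have "n + 1 \<le> 2^c" by (rule lower)
  then have "real (n + 1) \<le> real (2^c)" by (simp only: of_nat_le_iff)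
  then have "real n + 1 \<le> 2 ^ c" by simp
  then have "log 2 (real n + 1) \<le> log 2 (2 ^ c)"
    by (intro log_mono) auto
  then show ?thesis by (simp add: c_def)
qed



definition H :: "real \<times> real \<Rightarrow> complex" where
  "H p = complex_of_real (fst p + 1) * exp (\<i> * complex_of_real (2 * pi * snd p / 3))"

lemma H_eq_imp:
  assumes "0 \<le> fst p" "0 \<le> fst q" "0 \<le> snd p" "snd p < 3" "0 \<le> snd q" "snd q < 3" "H p = H q"
  shows "p = q"
proof -
  define a where "a = 2 * pi * snd p / 3"
  define b where "b = 2 * pi * snd q / 3"
  have "norm (H p) = fst p + 1" using assms(1) by (simp add: H_def norm_mult)
  moreover have "norm (H q) = fst q + 1" using assms(2) by (simp add: H_def norm_mult)
  ultimately have f: "fst p = fst q" using assms(7) by simp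
  have nz: "complex_of_real (fst p + 1) \<noteq> 0" using assms(1) by (simp add: complex_eq_iff)
  have "complex_of_real (fst p + 1) * exp (\<i> * complex_of_real a) = complex_of_real (fst p + 1) * exp (\<i> * complex_of_real b)"
    using assms(7) f by (simp add: H_def a_def b_def)
  then have "exp (\<i> * complex_of_real a) = exp (\<i> * complex_of_real b)" using nz by simp
  then obtain k :: int where k: "\<i> * complex_of_real a = \<i> * complex_of_real b + (of_int (2 * k) * pi) * \<i>"
    unfolding exp_eq by blast
  then have "Im (\<i> * complex_of_real a) = Im (\<i> * complex_of_real b + (of_int (2 * k) * pi) * \<i>)" by simp
  then have ab: "a = b + 2 * k * pi" by simp
  have "0 \<le> a" "a < 2*pi" "0 \<le> b" "b < 2*pi" using assms(3-6) pi_gt_zero by (auto simp: a_def b_def)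
  moreover have e: "2 * pi * real_of_int k = a - b" using ab by simp
  ultimately have lt: "2 * pi * real_of_int k < 2 * pi * 1" "2 * pi * (-1) < 2 * pi * real_of_int k"
    by linarith+
  have "real_of_int k < 1" using lt(1) pi_gt_zero mult_less_cancel_left_pos[of "2*pi" "real_of_int k" 1] by simp
  moreover have "-1 < real_of_int k" using lt(2) pi_gt_zero mult_less_cancel_left_pos[of "2*pi" "-1" "real_of_int k"] by simp
  ultimately have "-1 < real_of_int k" "real_of_int k < 1" by auto
  then have "k = 0" by linarith
  then have "a = b" using ab by simp
  then have "snd p = snd q" by (simp add: a_def b_def)
  then show ?thesis using f by (simp add: prod_eq_iff)
qed

lemma H_3: "H (l, 3) = H (l, 0)"
proof -
  have "exp (\<i> * complex_of_real (2*pi*3/3)) = 1" by (simp add: mult.commute)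
  then show ?thesis by (simp add: H_def)
qed

lemma H_cont: "continuous_on S H"
  unfolding H_def by (intro continuous_intros) auto

definition cyl :: "nat \<Rightarrow> real \<times> real" where
  "cyl v = (real (v div 2), real (v mod 2))"

definition posf :: "nat \<Rightarrow> complex" where "posf v = H (cyl v)"

definition stp :: "nat set \<Rightarrow> real \<times> real" where "stp e = cyl (Min e)"

definition enp :: "nat set \<Rightarrow> real \<times> real" where
  "enp e = (if Max e = Min e + 1 \<and> odd (Min e) then (real (Max e div 2), 3) else cyl (Max e))"

definition pt :: "nat set \<Rightarrow> real \<Rightarrow> real \<times> real" where
  "pt e s = ((1-s) * fst (stp e) + s * fst (enp e), (1-s) * snd (stp e) + s * snd (enp e))"

definition Gam :: "nat set \<Rightarrow> real \<Rightarrow> complex" where "Gam e s = H (pt e s)"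

definition dec :: "real \<times> real \<Rightarrow> nat set" where
  "dec p = (let m = nat \<lfloor>fst p\<rfloor> in
     if fst p = real m then {2*m, 2*m+1}
     else if snd p = 0 then {2*m, 2*m+2}
     else if snd p = 1 then {2*m+1, 2*m+3}
     else if snd p < 1 then {2*m, 2*m+3}
     else {2*m+1, 2*m+2})"

lemma sucmod [simp]: "Suc (t * 2) mod 2 = Suc 0" "Suc (Suc (t * 2)) mod 2 = 0" "Suc (Suc (Suc (t * 2))) mod 2 = Suc 0"
  by presburger+

lemma pt_R: "pt {2*t, 2*t+1} s = (real t, s)"
  by (simp add: pt_def stp_def enp_def cyl_def algebra_simps)
lemma pt_P: "pt {2*t, 2*t+2} s = (real t + s, 0)"
  by (simp add: pt_def stp_def enp_def cyl_def algebra_simps)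
lemma pt_D: "pt {2*t, 2*t+3} s = (real t + s, s)"
  by (simp add: pt_def stp_def enp_def cyl_def algebra_simps)
lemma pt_W: "pt {2*t+1, 2*t+2} s = (real t + s, 1 + 2 * s)"
  by (simp add: pt_def stp_def enp_def cyl_def algebra_simps)
lemma pt_Q: "pt {2*t+1, 2*t+3} s = (real t + s, 1)"
  by (simp add: pt_def stp_def enp_def cyl_def algebra_simps)

lemma floor_ts: "0 \<le> s \<Longrightarrow> s < 1 \<Longrightarrow> nat \<lfloor>real t + s\<rfloor> = t"
proof -
  assume "0 \<le> s" "s < 1"
  then have "\<lfloor>real t + s\<rfloor> = int t" by (simp add: floor_eq_iff)
  then show ?thesis by simp
qed

lemma not_cyl_ts: "0 < s \<Longrightarrow> s < 1 \<Longrightarrow> (real t + s, th) \<noteq> cyl v"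
proof
  assume h: "0 < s" "s < 1" "(real t + s, th) = cyl v"
  then have "real t + s = real (v div 2)" by (simp add: cyl_def)
  then have "real t < real (v div 2)" "real (v div 2) < real (t + 1)" using h by simp_all
  then have "t < v div 2" "v div 2 < t + 1" by (simp_all only: of_nat_less_iff)
  then show False by simp
qed

lemma not_cyl_R: "0 < s \<Longrightarrow> s < 1 \<Longrightarrow> (real t, s) \<noteq> cyl v"
proof
  assume h: "0 < s" "s < 1" "(real t, s) = cyl v"
  then have "s = real (v mod 2)" by (simp add: cyl_def)
  moreover have "v mod 2 = 0 \<or> v mod 2 = 1" by presburger
  ultimately show False using h by auto
qed

lemma dec_ts: "0 < s \<Longrightarrow> s < 1 \<Longrightarrow> dec (real t + s, th) =
     (if th = 0 then {2*t, 2*t+2} else if th = 1 then {2*t+1, 2*t+3}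
      else if th < 1 then {2*t, 2*t+3} else {2*t+1, 2*t+2})"
proof -
  assume h: "0 < s" "s < 1"
  then have f: "nat \<lfloor>real t + s\<rfloor> = t" by (intro floor_ts) auto
  have ne: "real t + s \<noteq> real t" using h by simp
  show ?thesis unfolding dec_def Let_def fst_conv snd_conv f using ne by (simp only: if_False)
qed

lemma interior:
  assumes "e \<in> EE n" "0 < s" "s < 1"
  shows "0 \<le> fst (pt e s) \<and> 0 \<le> snd (pt e s) \<and> snd (pt e s) < 3 \<and> dec (pt e s) = e \<and> (\<forall>v. pt e s \<noteq> cyl v)"
  using E_cases[OF assms(1)]
proof (elim disjE exE conjE)
  fix t assume e: "e = {2*t, 2*t+1}"
  have p: "pt e s = (real t, s)" unfolding e by (rule pt_R)
  have "dec (real t, s) = {2*t, 2*t+1}" by (simp add: dec_def Let_def)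
  then show ?thesis using assms(2,3) not_cyl_R unfolding p by (simp add: e)
next
  fix t assume e: "e = {2*t, 2*t+2}"
  have p: "pt e s = (real t + s, 0)" unfolding e by (rule pt_P)
  show ?thesis using assms(2,3) not_cyl_ts unfolding p dec_ts[OF assms(2,3)] by (simp add: e)
next
  fix t assume e: "e = {2*t, 2*t+3}"
  have p: "pt e s = (real t + s, s)" unfolding e by (rule pt_D)
  show ?thesis using assms(2,3) not_cyl_ts unfolding p dec_ts[OF assms(2,3)] by (simp add: e)
next
  fix t assume e: "e = {2*t+1, 2*t+2}"
  have p: "pt e s = (real t + s, 1 + 2 * s)" unfolding e by (rule pt_W)
  show ?thesis using assms(2,3) not_cyl_ts unfolding p dec_ts[OF assms(2,3)] by (simp add: e)
next
  fix t assume e: "e = {2*t+1, 2*t+3}"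
  have p: "pt e s = (real t + s, 1)" unfolding e by (rule pt_Q)
  show ?thesis using assms(2,3) not_cyl_ts unfolding p dec_ts[OF assms(2,3)] by (simp add: e)
qed


lemma E_props:
  assumes "e \<in> EE n"
  shows "Min e < Max e \<and> e = {Min e, Max e} \<and> e \<subseteq> VV n \<and> (\<forall>s s'. pt e s = pt e s' \<longrightarrow> s = s')"
  using E_cases[OF assms]
proof (elim disjE exE conjE)
  fix t assume "t < n" and e: "e = {2*t, 2*t+1}"
  have p: "pt e s = (real t, s)" for s unfolding e by (rule pt_R)
  show ?thesis using \<open>t < n\<close> unfolding p by (simp add: e VV_def)
next
  fix t assume "t + 1 < n" and e: "e = {2*t, 2*t+2}"
  have p: "pt e s = (real t + s, 0)" for s unfolding e by (rule pt_P)
  show ?thesis using \<open>t + 1 < n\<close> unfolding p by (simp add: e VV_def)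
next
  fix t assume "t + 1 < n" and e: "e = {2*t, 2*t+3}"
  have p: "pt e s = (real t + s, s)" for s unfolding e by (rule pt_D)
  show ?thesis using \<open>t + 1 < n\<close> unfolding p by (simp add: e VV_def)
next
  fix t assume "t + 1 < n" and e: "e = {2*t+1, 2*t+2}"
  have p: "pt e s = (real t + s, 1 + 2 * s)" for s unfolding e by (rule pt_W)
  show ?thesis using \<open>t + 1 < n\<close> unfolding p by (simp add: e VV_def)
next
  fix t assume "t + 1 < n" and e: "e = {2*t+1, 2*t+3}"
  have p: "pt e s = (real t + s, 1)" for s unfolding e by (rule pt_Q)
  show ?thesis using \<open>t + 1 < n\<close> unfolding p by (simp add: e VV_def)
qed

lemma cyl_bounds: "0 \<le> fst (cyl v)" "0 \<le> snd (cyl v)" "snd (cyl v) < 3"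
proof -
  have "v mod 2 < 2" by simp
  then have "real (v mod 2) < 2" by linarith
  then show "0 \<le> fst (cyl v)" "0 \<le> snd (cyl v)" "snd (cyl v) < 3" by (simp_all add: cyl_def)
qed

lemma posf_inj: "posf u = posf v \<Longrightarrow> u = v"
proof -
  assume "posf u = posf v"
  then have "cyl u = cyl v" unfolding posf_def by (intro H_eq_imp cyl_bounds)
  then have "u div 2 = v div 2" "u mod 2 = v mod 2" by (simp_all add: cyl_def)
  then show "u = v" by (metis div_mult_mod_eq)
qed

lemma Gam0: "Gam e 0 = posf (Min e)"
  by (simp add: Gam_def pt_def stp_def posf_def)

lemma Gam1: "Gam e 1 = posf (Max e)"
proof (cases "Max e = Min e + 1 \<and> odd (Min e)")
  case True
  then have "Max e mod 2 = 0" by presburger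
  then have "cyl (Max e) = (real (Max e div 2), 0)" by (simp add: cyl_def)
  moreover have "enp e = (real (Max e div 2), 3)" unfolding enp_def using True by (intro if_P)
  moreover have "pt e 1 = enp e" by (simp add: pt_def)
  ultimately show ?thesis using H_3 unfolding Gam_def posf_def by metis
next
  case False
  then have "enp e = cyl (Max e)" unfolding enp_def by (intro if_not_P)
  moreover have "pt e 1 = enp e" by (simp add: pt_def)
  ultimately show ?thesis unfolding Gam_def posf_def by simp
qed

lemma not_vertex:
  assumes "e \<in> EE n" "0 < s" "s < 1"
  shows "Gam e s \<noteq> posf v"
proof
  assume "Gam e s = posf v"
  then have "pt e s = cyl v" using interior[OF assms] unfolding Gam_def posf_def
    by (intro H_eq_imp cyl_bounds) auto
  then show False using interior[OF assms] by auto
qed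

lemma interior_eq:
  assumes "e \<in> EE n" "0 < s" "s < 1" "f \<in> EE n" "0 < s'" "s' < 1" "Gam e s = Gam f s'"
  shows "e = f \<and> pt e s = pt f s'"
proof -
  have "pt e s = pt f s'" using interior[OF assms(1-3)] interior[OF assms(4-6)] assms(7)
    unfolding Gam_def by (intro H_eq_imp) auto
  moreover then have "e = f" using interior[OF assms(1-3)] interior[OF assms(4-6)] by metis
  ultimately show ?thesis by simp
qed

lemma Gam_cont: "continuous_on S (Gam e)"
  unfolding Gam_def pt_def H_def by (intro continuous_intros) auto


lemma Gam_end:
  assumes "e \<in> EE n" "s \<in> {0..1}" "\<not> (0 < s \<and> s < 1)"
  shows "\<exists>v\<in>e. Gam e s = posf v"
proof -
  have "s = 0 \<or> s = 1" using assms(2,3) by auto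
  moreover have "Min e \<in> e" "Max e \<in> e" using E_props[OF assms(1)] by blast+
  ultimately show ?thesis using Gam0 Gam1 by metis
qed

lemma planar_G: "planar (VV n) (EE n)"
proof -
  have inj: "inj_on posf (VV n)" by (auto intro: inj_onI posf_inj)
  have edge: "arc (Gam e) \<and> {pathstart (Gam e), pathfinish (Gam e)} = posf ` e \<and>
      path_image (Gam e) \<inter> posf ` VV n = posf ` e" if e: "e \<in> EE n" for e
  proof (intro conjI)
    have EP: "Min e < Max e" "e = {Min e, Max e}" "e \<subseteq> VV n" "\<And>s s'. pt e s = pt e s' \<Longrightarrow> s = s'"
      using E_props[OF e] by blast+
    have "inj_on (Gam e) {0..1}"
    proof (rule inj_onI)
      fix s s' assume s: "s \<in> {0..1}" "s' \<in> {0..1}" "Gam e s = Gam e s'"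
      show "s = s'"
      proof (cases "0 < s \<and> s < 1")
        case True
        show ?thesis
        proof (cases "0 < s' \<and> s' < 1")
          case True
          then show ?thesis using interior_eq[OF e _ _ e, of s s'] \<open>0 < s \<and> s < 1\<close> s EP(4) by blast
        next
          case False
          then obtain v where "Gam e s' = posf v" using Gam_end[OF e s(2)] by blast
          then show ?thesis using not_vertex[OF e, of s v] True s(3) by auto
        qed
      next
        case False
        show ?thesis
        proof (cases "0 < s' \<and> s' < 1")
          case True
          obtain v where "Gam e s = posf v" using Gam_end[OF e s(1) False] by blast
          then show ?thesis using not_vertex[OF e, of s' v] True s(3) by auto
        next
          case False
          have "s = 0 \<or> s = 1" "s' = 0 \<or> s' = 1" using s(1,2) False \<open>\<not> (0 < s \<and> s < 1)\<close> by auto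
          moreover have "posf (Min e) \<noteq> posf (Max e)" using EP(1) posf_inj by fastforce
          ultimately show ?thesis using s(3) Gam0 Gam1 by metis
        qed
      qed
    qed
    then show "arc (Gam e)" unfolding arc_def path_def using Gam_cont by blast
    show "{pathstart (Gam e), pathfinish (Gam e)} = posf ` e"
      unfolding pathstart_def pathfinish_def Gam0 Gam1 by (subst EP(2)) simp
    show "path_image (Gam e) \<inter> posf ` VV n = posf ` e"
    proof
      show "path_image (Gam e) \<inter> posf ` VV n \<subseteq> posf ` e"
      proof
        fix z assume "z \<in> path_image (Gam e) \<inter> posf ` VV n"
        then obtain s v where s: "s \<in> {0..1}" "z = Gam e s" "z = posf v"
          unfolding path_image_def by blast
        show "z \<in> posf ` e"
        proof (cases "0 < s \<and> s < 1")
          case True then show ?thesis using not_vertex[OF e, of s v] s by auto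
        next
          case False then show ?thesis using Gam_end[OF e s(1)] s by auto
        qed
      qed
      show "posf ` e \<subseteq> path_image (Gam e) \<inter> posf ` VV n"
      proof
        fix z assume "z \<in> posf ` e"
        then obtain v where v: "v \<in> e" "z = posf v" by blast
        then have "v = Min e \<or> v = Max e" using EP(2) by blast
        then have "z = Gam e 0 \<or> z = Gam e 1" using v Gam0 Gam1 by metis
        then have "z \<in> path_image (Gam e)" unfolding path_image_def by auto
        moreover have "z \<in> posf ` VV n" using v EP(3) by blast
        ultimately show "z \<in> path_image (Gam e) \<inter> posf ` VV n" by blast
      qed
    qed
  qed
  have cross: "path_image (Gam e) \<inter> path_image (Gam e') \<subseteq> posf ` (e \<inter> e')"
    if e: "e \<in> EE n" and e': "e' \<in> EE n" and ne: "e \<noteq> e'" for e e'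
  proof
    fix z assume "z \<in> path_image (Gam e) \<inter> path_image (Gam e')"
    then obtain s s' where s: "s \<in> {0..1}" "s' \<in> {0..1}" "z = Gam e s" "z = Gam e' s'"
      unfolding path_image_def by blast
    show "z \<in> posf ` (e \<inter> e')"
    proof (cases "0 < s \<and> s < 1")
      case True
      show ?thesis
      proof (cases "0 < s' \<and> s' < 1")
        case True
        then show ?thesis using interior_eq[OF e _ _ e', of s s'] \<open>0 < s \<and> s < 1\<close> s ne by auto
      next
        case False
        then obtain v where "Gam e' s' = posf v" using Gam_end[OF e' s(2)] by blast
        then show ?thesis using not_vertex[OF e, of s v] True s by auto
      qed
    next
      case False
      obtain u where u: "u \<in> e" "Gam e s = posf u" using Gam_end[OF e s(1) False] by blast
      show ?thesis
      proof (cases "0 < s' \<and> s' < 1")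
        case True
        then show ?thesis using not_vertex[OF e', of s' u] u s by auto
      next
        case False
        obtain u' where u': "u' \<in> e'" "Gam e' s' = posf u'" using Gam_end[OF e' s(2) False] by blast
        then have "u = u'" using u s posf_inj by metis
        then show ?thesis using u u' s by blast
      qed
    qed
  qed
  show ?thesis unfolding planar_def
    by (rule exI[of _ posf], rule exI[of _ Gam]) (use inj edge cross in blast)
qed


theorem theorem1:
  fixes n :: nat
  assumes "n \<ge> 1"
  shows "\<exists>(V :: nat set) (E :: nat set set).
           simple_graph V E \<and> card V = 2 * n \<and> planar V E \<and>
           pathwidth V E \<le> 3 \<and> max_degree V E \<le> 5 \<and>
           real (anagram_chromatic_number V E) \<ge> log 2 (real n + 1)"
proof -
  have "simple_graph (VV n) (EE n) \<and> card (VV n) = 2 * n \<and> planar (VV n) (EE n) \<and>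
           pathwidth (VV n) (EE n) \<le> 3 \<and> max_degree (VV n) (EE n) \<le> 5 \<and>
           real (anagram_chromatic_number (VV n) (EE n)) \<ge> log 2 (real n + 1)"
    using simple cardV planar_G pw[OF assms] maxdeg chrom[OF assms] by blast
  then show ?thesis by blast
qed

end
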